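(* Let $q>1$ be a prime number and $k\ge1$. Then $\mathcal{Q}(\mathbf{ŁV}_{q+1}\times\mathbf{ŁV}_2)\subseteq\mathcal{Q}(\mathbf{ŁV}_{k+1})$ if and only if $q\mid k$.
   Context: $\mathbf{ŁV}_{n+1}$ is the MV-algebra (Łukasiewicz chain) on $\{0,\frac1n,\dots,\frac{n-1}n,1\}$ with $\neg x=1-x$, $x\oplus y=\min\{1,x+y\}$; $\mathbf{ŁV}_2$ is the two-element Boolean algebra. For a class (or single algebra) $K$, $\mathcal{Q}(K)$ denotes the quasivariety generated by $K$. *)

theory Defs
  imports Complex_Main "HOL-Computational_Algebra.Primes"
begin

datatype mvterm = Var nat | Zero | Neg mvterm | Oplus mvterm mvterm

record 'a mvalg =
  carrier :: "'a set"
  zero :: 'a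
  neg :: "'a \<Rightarrow> 'a"
  oplus :: "'a \<Rightarrow> 'a \<Rightarrow> 'a"

fun eval :: "'a mvalg \<Rightarrow> (nat \<Rightarrow> 'a) \<Rightarrow> mvterm \<Rightarrow> 'a" where
  "eval A v (Var i) = v i"
| "eval A v Zero = zero A"
| "eval A v (Neg t) = neg A (eval A v t)"
| "eval A v (Oplus s t) = oplus A (eval A v s) (eval A v t)"

type_synonym quasi_identity = "(mvterm \<times> mvterm) list \<times> (mvterm \<times> mvterm)"

definition satisfies_qi :: "'a mvalg \<Rightarrow> quasi_identity \<Rightarrow> bool" where
  "satisfies_qi A \<phi> \<longleftrightarrow>
     (\<forall>v. (\<forall>i. v i \<in> carrier A) \<longrightarrow>
        (\<forall>(s, t) \<in> set (fst \<phi>). eval A v s = eval A v t) \<longrightarrow>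
        eval A v (fst (snd \<phi>)) = eval A v (snd (snd \<phi>)))"

definition qtheory :: "'a mvalg \<Rightarrow> quasi_identity set" where
  "qtheory A = {\<phi>. satisfies_qi A \<phi>}"

text \<open>\<open>Q(A) \<subseteq> Q(B)\<close>: since \<open>Q(K)\<close> is the class of models of the quasi-identity
  theory of \<open>K\<close>, this means every quasi-identity valid in \<open>B\<close> is valid in \<open>A\<close>.\<close>
definition Q_subseteq :: "'a mvalg \<Rightarrow> 'b mvalg \<Rightarrow> bool" where
  "Q_subseteq A B \<longleftrightarrow> qtheory B \<subseteq> qtheory A"

text \<open>\<open>LV n\<close> is the Lukasiewicz chain \<open>\<L>V_{n+1}\<close> on \<open>{0, 1/n, ..., 1}\<close>.\<close>
definition LV :: "nat \<Rightarrow> real mvalg" where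
  "LV n = \<lparr> carrier = {real i / real n | i. i \<le> n},
            zero = 0,
            neg = (\<lambda>x. 1 - x),
            oplus = (\<lambda>x y. min 1 (x + y)) \<rparr>"

definition prod_alg :: "'a mvalg \<Rightarrow> 'b mvalg \<Rightarrow> ('a \<times> 'b) mvalg" where
  "prod_alg A B = \<lparr> carrier = carrier A \<times> carrier B,
            zero = (zero A, zero B),
            neg = (\<lambda>(x, y). (neg A x, neg B y)),
            oplus = (\<lambda>(x, y) (x', y'). (oplus A x x', oplus B y y')) \<rparr>"

end

theory Submission
  imports Defs
begin

fun mult :: "nat \<Rightarrow> mvterm \<Rightarrow> mvterm" where
  "mult 0 t = Zero"
| "mult (Suc j) t = Oplus t (mult j t)"

lemma eval_LV_indep: "eval (LV n) v t = eval (LV m) v t"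
  by (induction t) (simp_all add: LV_def)

lemma eval_prod: "eval (prod_alg A B) v t = (eval A (fst o v) t, eval B (snd o v) t)"
  by (induction t) (auto simp: prod_alg_def split: prod.splits)

lemma eval_mult:
  assumes "0 \<le> eval (LV n) v t"
  shows "eval (LV n) v (mult j t) = min 1 (real j * eval (LV n) v t)"
  using assms
proof (induction j)
  case 0 then show ?case by (simp add: LV_def)
next
  case (Suc j)
  then show ?case by (simp add: LV_def algebra_simps)
qed

definition phi :: "nat \<Rightarrow> quasi_identity" where
  "phi q = ([(Oplus (mult q (Var 0)) (mult q (Var 0)), mult q (Var 0)),
             (Neg (Oplus (Neg (Var 0)) (Neg (mult (q-1) (Var 0)))), Zero)], (Var 0, Zero))"

lemma phi_valid:
  assumes "prime q" "k \<ge> 1" "\<not> q dvd k"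
  shows "satisfies_qi (LV k) (phi q)"
  unfolding satisfies_qi_def
proof (intro allI impI)
  fix v :: "nat \<Rightarrow> real"
  assume c: "\<forall>i. v i \<in> carrier (LV k)"
  assume p: "\<forall>(s, t) \<in> set (fst (phi q)). eval (LV k) v s = eval (LV k) v t"
  obtain i where i: "v 0 = real i / real k" "i \<le> k" using c by (auto simp: LV_def)
  define x where "x = v 0"
  have x0: "0 \<le> x" using i x_def by simp
  have x1: "x \<le> 1" using i x_def assms by (simp add: divide_le_eq_1)
  have ev0: "eval (LV k) v (Var 0) = x" by (simp add: x_def)
  have ms: "eval (LV k) v (mult j (Var 0)) = min 1 (real j * x)" for j
    using eval_mult[of k v "Var 0" j] x0 by (simp add: x_def)
  have q2: "q \<ge> 2" using assms prime_ge_2_nat by blast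
  have p1: "min 1 (2 * min 1 (real q * x)) = min 1 (real q * x)"
    using p ms by (simp add: phi_def LV_def)
  have p2: "1 - min 1 ((1 - x) + (1 - min 1 (real (q-1) * x))) = 0"
    using p ms by (simp add: phi_def LV_def x_def)
  have rq: "real (q-1) = real q - 1" using q2 by simp
  show "eval (LV k) v (fst (snd (phi q))) = eval (LV k) v (snd (snd (phi q)))"
  proof (cases "real q * x \<le> 0")
    case True
    then have "x = 0" using x0 q2
      by (metis le_less_trans mult_pos_pos not_le of_nat_0_less_iff order_le_less pos2 less_le_trans)
    then show ?thesis by (simp add: phi_def LV_def x_def)
  next
    case False
    then have qx: "real q * x \<ge> 1" using p1 by (smt (verit))
    have "real q * x = 1" using qx p2 rq x0 by (smt (verit, best) left_diff_distrib mult_cancel_right2)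
    then have "real q * real i = real k" using i x_def assms by (simp add: field_simps)
    then have "q * i = k" by (metis of_nat_eq_iff of_nat_mult)
    then show ?thesis using assms by auto
  qed
qed

theorem corollary5p4:
  fixes q k :: nat
  assumes "prime q" and "q > 1" and "k \<ge> 1"
  shows "Q_subseteq (prod_alg (LV q) (LV 1)) (LV k) \<longleftrightarrow> q dvd k"
proof
  assume h: "Q_subseteq (prod_alg (LV q) (LV 1)) (LV k)"
  show "q dvd k"
  proof (rule ccontr)
    assume nd: "\<not> q dvd k"
    have "satisfies_qi (prod_alg (LV q) (LV 1)) (phi q)"
      using h phi_valid[OF assms(1) assms(3) nd] by (auto simp: Q_subseteq_def qtheory_def)
    moreover define v :: "nat \<Rightarrow> real \<times> real" where "v = (\<lambda>_. (1 / real q, 0))"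
    moreover have "\<forall>i. v i \<in> carrier (prod_alg (LV q) (LV 1))"
    proof -
      have "1 / real q \<in> carrier (LV q)" using assms by (auto simp: LV_def intro!: exI[of _ 1])
      moreover have "(0::real) \<in> carrier (LV 1)" by (auto simp: LV_def intro!: exI[of _ 0])
      ultimately show ?thesis by (simp add: v_def prod_alg_def)
    qed
    ultimately have concl: "(\<forall>(s, t) \<in> set (fst (phi q)). eval (prod_alg (LV q) (LV 1)) v s = eval (prod_alg (LV q) (LV 1)) v t) \<longrightarrow>
        eval (prod_alg (LV q) (LV 1)) v (fst (snd (phi q))) = eval (prod_alg (LV q) (LV 1)) v (snd (snd (phi q)))"
      unfolding satisfies_qi_def by (metis (no_types, lifting))
    have qpos: "real q > 0" using assms by simp
    have m1: "eval (LV q) (fst o v) (mult j (Var 0)) = min 1 (real j / real q)" for j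
      using eval_mult[of q "fst o v" "Var 0" j] qpos by (simp add: v_def)
    have m2: "eval (LV 1) (snd o v) (mult j (Var 0)) = 0" for j
      using eval_mult[of 1 "snd o v" "Var 0" j] by (simp add: v_def)
    have rq: "real (q-1) / real q = 1 - 1 / real q" using assms qpos by (simp add: field_simps)
    have "\<forall>(s, t) \<in> set (fst (phi q)). eval (prod_alg (LV q) (LV 1)) v s = eval (prod_alg (LV q) (LV 1)) v t"
      using qpos rq by (simp only: phi_def eval_prod eval.simps m1 m2 list.set fst_conv snd_conv ball_simps prod.case) (simp add: LV_def v_def)
    with concl have "eval (prod_alg (LV q) (LV 1)) v (Var 0) = eval (prod_alg (LV q) (LV 1)) v Zero"
      by (simp add: phi_def)
    then show False using qpos by (simp add: eval_prod v_def LV_def prod_alg_def)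
  qed
next
  assume d: "q dvd k"
  then obtain m where m: "k = q * m" by auto
  show "Q_subseteq (prod_alg (LV q) (LV 1)) (LV k)"
    unfolding Q_subseteq_def qtheory_def
  proof safe
    fix \<phi> assume s: "satisfies_qi (LV k) \<phi>"
    have cq: "carrier (LV q) \<subseteq> carrier (LV k)"
    proof
      fix y assume "y \<in> carrier (LV q)"
      then obtain i where "y = real i / real q" "i \<le> q" by (auto simp: LV_def)
      moreover have "real i / real q = real (i * m) / real k"
        using m assms by (cases "m = 0") (auto simp: field_simps)
      moreover have "i * m \<le> k" using m \<open>i \<le> q\<close> by simp
      ultimately show "y \<in> carrier (LV k)" unfolding LV_def by (simp only: mvalg.select_convs) blast
    qed
    have c1: "carrier (LV 1) \<subseteq> carrier (LV k)"
    proof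
      fix y assume "y \<in> carrier (LV 1)"
      then obtain i where "y = real i" "i \<le> 1" by (auto simp: LV_def)
      then have "y = real (i * k) / real k" "i * k \<le> k" using assms by auto
      then show "y \<in> carrier (LV k)" unfolding LV_def by (simp only: mvalg.select_convs) blast
    qed
    show "satisfies_qi (prod_alg (LV q) (LV 1)) \<phi>"
      unfolding satisfies_qi_def
    proof (intro allI impI)
      fix v :: "nat \<Rightarrow> real \<times> real" assume cv: "\<forall>i. v i \<in> carrier (prod_alg (LV q) (LV 1))"
      assume pr: "\<forall>(s, t) \<in> set (fst \<phi>). eval (prod_alg (LV q) (LV 1)) v s = eval (prod_alg (LV q) (LV 1)) v t"
      have v1: "\<forall>i. (fst o v) i \<in> carrier (LV k)" using cv cq by (force simp: prod_alg_def mem_Times_iff)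
      have v2: "\<forall>i. (snd o v) i \<in> carrier (LV k)" using cv c1 by (force simp: prod_alg_def mem_Times_iff)
      have e1: "eval (LV q) w t = eval (LV k) w t" "eval (LV 1) w t = eval (LV k) w t" "eval (LV (Suc 0)) w t = eval (LV k) w t" for w t
        by (rule eval_LV_indep)+
      have pr1: "\<forall>(s, t) \<in> set (fst \<phi>). eval (LV k) (fst o v) s = eval (LV k) (fst o v) t"
        using pr by (auto simp: eval_prod e1)
      have pr2: "\<forall>(s, t) \<in> set (fst \<phi>). eval (LV k) (snd o v) s = eval (LV k) (snd o v) t"
        using pr by (auto simp: eval_prod e1)
      have "eval (LV k) (fst o v) (fst (snd \<phi>)) = eval (LV k) (fst o v) (snd (snd \<phi>))"
        using s v1 pr1 unfolding satisfies_qi_def by blast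
      moreover have "eval (LV k) (snd o v) (fst (snd \<phi>)) = eval (LV k) (snd o v) (snd (snd \<phi>))"
        using s v2 pr2 unfolding satisfies_qi_def by blast
      ultimately show "eval (prod_alg (LV q) (LV 1)) v (fst (snd \<phi>)) = eval (prod_alg (LV q) (LV 1)) v (snd (snd \<phi>))"
        by (simp add: eval_prod e1)
    qed
  qed
qed

end
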